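(* For positive integers $d$ and $h$, let $\mathrm{spec}(d,h)$ be the set of complex numbers $\lambda$ such that $\lambda$ is an eigenvalue of some $d\times d$ matrix all of whose entries are integers in $[-h,h]$. If $n$ is a power of $2$, then $$|\mathrm{spec}(2n+1,h)|\ \ge\ \frac{2n}{5^{2n}}\, h^{n^2}.$$
   Context: $h$ is a positive integer. An integer matrix of height $h$ means an integer matrix whose entries lie in $[-h,h]$. *)

theory Defs
  imports Complex_Main "Jordan_Normal_Form.Char_Poly"
begin

definition int_mats_height :: "nat \<Rightarrow> nat \<Rightarrow> int mat set" where
  "int_mats_height d h = {A \<in> carrier_mat d d. \<forall>i<d. \<forall>j<d. \<bar>A $$ (i, j)\<bar> \<le> int h}"

definition spec :: "nat \<Rightarrow> nat \<Rightarrow> complex set" where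
  "spec d h = {z. \<exists>A \<in> int_mats_height d h. eigenvalue (map_mat of_int A) z}"

end

theory Submission
  imports Defs
begin


lemma eis_aux:
  fixes A B :: "int poly" and q :: int
  assumes prime: "prime q" and QAB: "Q = A * B"
    and dv: "\<And>i. i < degree Q \<Longrightarrow> q dvd coeff Q i"
    and b0: "\<not> q dvd coeff B 0" and dA: "degree A < degree Q"
  shows "i \<le> degree A \<Longrightarrow> q dvd coeff A i"
proof (induction i rule: less_induct)
  case (less i)
  have "coeff Q i = (\<Sum>j\<le>i. coeff A j * coeff B (i - j))"
    unfolding QAB coeff_mult by simp
  also have "\<dots> = (\<Sum>j<i. coeff A j * coeff B (i - j)) + coeff A i * coeff B 0"
    by (simp add: lessThan_Suc_atMost[symmetric])
  finally have eq: "coeff Q i = (\<Sum>j<i. coeff A j * coeff B (i - j)) + coeff A i * coeff B 0" .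
  have "q dvd (\<Sum>j<i. coeff A j * coeff B (i - j))"
    by (rule dvd_sum) (use less in auto)
  moreover have "q dvd coeff Q i" using dv less.prems dA by simp
  ultimately have "q dvd coeff A i * coeff B 0" using eq
    by (metis dvd_add_right_iff)
  with prime b0 show ?case
    using prime_dvd_mult_iff by blast
qed

lemma eis_irreducible:
  fixes Q :: "int poly" and q :: int
  assumes prime: "prime q" and mon: "lead_coeff Q = 1" and deg: "degree Q \<ge> 1"
    and dv: "\<And>i. i < degree Q \<Longrightarrow> q dvd coeff Q i"
    and nd: "\<not> q^2 dvd coeff Q 0"
  shows "irreducible Q"
proof (rule irreducibleI)
  show "Q \<noteq> 0" using mon by auto
  show "\<not> is_unit Q" using deg by (auto simp: is_unit_poly_iff)
  fix A B assume QAB: "Q = A * B"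
  show "is_unit A \<or> is_unit B"
  proof (rule ccontr)
    assume nu: "\<not> (is_unit A \<or> is_unit B)"
    have A0: "A \<noteq> 0" and B0: "B \<noteq> 0" using QAB \<open>Q \<noteq> 0\<close> by auto
    have lc: "lead_coeff A * lead_coeff B = 1" using QAB mon by (simp add: lead_coeff_mult)
    hence uA: "is_unit (lead_coeff A)" and uB: "is_unit (lead_coeff B)"
      by (metis dvd_triv_left dvd_triv_right)+
    have dA: "degree A \<ge> 1"
    proof (rule ccontr)
      assume "\<not> degree A \<ge> 1"
      hence "degree A = 0" by simp
      hence "A = [:lead_coeff A:]" by (metis degree_0_id)
      hence "is_unit A" using uA by (metis is_unit_poly_iff)
      with nu show False by simp
    qed
    have dB: "degree B \<ge> 1"
    proof (rule ccontr)
      assume "\<not> degree B \<ge> 1"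
      hence "degree B = 0" by simp
      hence "B = [:lead_coeff B:]" by (metis degree_0_id)
      hence "is_unit B" using uB by (metis is_unit_poly_iff)
      with nu show False by simp
    qed
    have dQ: "degree Q = degree A + degree B" using QAB A0 B0 by (simp add: degree_mult_eq)
    have c0: "coeff Q 0 = coeff A 0 * coeff B 0" using QAB by (simp add: coeff_mult)
    have "q dvd coeff Q 0" using dv deg by simp
    hence "q dvd coeff A 0 \<or> q dvd coeff B 0" using c0 prime prime_dvd_mult_iff by auto
    moreover have "\<not> (q dvd coeff A 0 \<and> q dvd coeff B 0)"
    proof
      assume "q dvd coeff A 0 \<and> q dvd coeff B 0"
      hence "q * q dvd coeff Q 0" using c0 by (simp add: mult_dvd_mono)
      with nd show False by (simp add: power2_eq_square)
    qed
    ultimately have "(q dvd coeff A 0 \<and> \<not> q dvd coeff B 0) \<or> (q dvd coeff B 0 \<and> \<not> q dvd coeff A 0)"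
      by blast
    thus False
    proof
      assume h: "q dvd coeff A 0 \<and> \<not> q dvd coeff B 0"
      have "q dvd coeff A (degree A)"
        by (rule eis_aux[OF prime QAB dv]) (use h dQ dB in auto)
      hence "is_unit q" using uA by (meson dvd_trans)
      from not_prime_unit[OF this] prime show False by simp
    next
      assume h: "q dvd coeff B 0 \<and> \<not> q dvd coeff A 0"
      have QBA: "Q = B * A" using QAB by (simp add: mult.commute)
      have "q dvd coeff B (degree B)"
        by (rule eis_aux[OF prime QBA dv]) (use h dQ dA in auto)
      hence "is_unit q" using uB by (meson dvd_trans)
      from not_prime_unit[OF this] prime show False by simp
    qed
  qed
qed

lemma no_common_root:
  fixes Q R :: "int poly" and z :: complex
  assumes pr: "prime_elem Q" and R0: "R \<noteq> 0" and dR: "degree R < degree Q"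
    and zQ: "poly (of_int_poly Q) z = 0" and zR: "poly (of_int_poly R) z = 0"
  shows False
proof -
  define P where "P = (\<lambda>d. \<exists>R. R \<noteq> 0 \<and> poly (of_int_poly R) z = 0 \<and> degree R = d)"
  have "P (degree R)" unfolding P_def using R0 zR by auto
  define d0 where "d0 = (LEAST d. P d)"
  have Pd0: "P d0" unfolding d0_def by (rule LeastI) fact
  have d0le: "d0 \<le> degree R" unfolding d0_def by (rule Least_le) fact
  from Pd0 obtain Rm where Rm0: "Rm \<noteq> 0" and zRm: "poly (of_int_poly Rm) z = 0"
    and dRm: "degree Rm = d0" unfolding P_def by auto
  define r where "r = pseudo_mod Q Rm"
  obtain a S where a0: "a \<noteq> 0" and eq: "Polynomial.smult a Q = Rm * S + r"
    using pseudo_mod(1)[OF Rm0, of Q] unfolding r_def by auto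
  have rdeg: "r = 0 \<or> degree r < degree Rm" using pseudo_mod(2)[OF Rm0, of Q] unfolding r_def by auto
  have "of_int_poly (Polynomial.smult a Q) = (of_int_poly (Rm * S + r) :: complex poly)" using eq by simp
  hence "poly (of_int_poly (Polynomial.smult a Q)) z = (poly (of_int_poly (Rm * S + r)) z :: complex)" by simp
  hence zr: "poly (of_int_poly r) z = 0" using zQ zRm by (simp add: hom_distribs)
  have r0: "r = 0"
  proof (rule ccontr)
    assume "r \<noteq> 0"
    hence "P (degree r)" unfolding P_def using zr by auto
    hence "d0 \<le> degree r" unfolding d0_def by (rule Least_le)
    with rdeg \<open>r \<noteq> 0\<close> dRm show False by simp
  qed
  have "Rm * S = [:a:] * Q" using eq r0 by simp
  hence "Q dvd Rm * S" by (metis dvd_triv_right)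
  hence "Q dvd Rm \<or> Q dvd S" using pr prime_elem_dvd_mult_iff by blast
  thus False
  proof
    assume "Q dvd Rm"
    hence "degree Q \<le> degree Rm" using Rm0 by (simp add: dvd_imp_degree_le)
    with dRm d0le dR show False by simp
  next
    assume "Q dvd S"
    then obtain U where SU: "S = Q * U" by (auto elim: dvdE)
    have Q0: "Q \<noteq> 0" using pr by auto
    have "[:a:] * Q = (Rm * U) * Q" using eq r0 SU by (simp add: algebra_simps)
    hence "[:a:] = Rm * U" using mult_right_cancel[OF Q0] by blast
    hence "degree (Rm * U) = 0" by (metis degree_pCons_0)
    moreover have "U \<noteq> 0" using \<open>[:a:] = Rm * U\<close> a0 by auto
    ultimately have "degree Rm = 0" using Rm0 by (simp add: degree_mult_eq)
    then obtain c where c: "Rm = [:c:]" by (rule degree_eq_zeroE)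
    have "of_int_poly [:c:] = ([:of_int c:] :: complex poly)"
      using of_int_hom.map_poly_hom_monom[of c 0] by (simp add: monom_0)
    hence "poly (of_int_poly Rm) z = of_int c" unfolding c by simp
    with zRm have "c = 0" by simp
    with c Rm0 show False by simp
  qed
qed



definition Pol :: "int \<Rightarrow> (nat \<Rightarrow> int) \<Rightarrow> nat \<Rightarrow> int poly" where
  "Pol w0 T L = monom 1 L - (\<Sum>K\<in>{2..L-1}. monom (w0 * T K) (L-1-K))"

lemma coeff_Pol:
  "coeff (Pol w0 T L) t = (if t = L then 1 else if t + 3 \<le> L then - (w0 * T (L-1-t)) else 0)"
proof -
  have s: "(\<Sum>K\<in>{2..L-1}. coeff (monom (w0 * T K) (L-1-K)) t)
      = (\<Sum>K\<in>{2..L-1}. if K = L-1-t \<and> t + 3 \<le> L then w0 * T K else 0)"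
    by (rule sum.cong) (auto simp: coeff_monom)
  also have "\<dots> = (if t + 3 \<le> L then w0 * T (L-1-t) else 0)"
    by (cases "t + 3 \<le> L") (auto simp: sum.delta)
  finally show ?thesis unfolding Pol_def coeff_diff coeff_sum
    by (auto simp: coeff_monom)
qed

lemma degree_Pol: "degree (Pol w0 T L) = L"
proof (rule order.antisym)
  show "degree (Pol w0 T L) \<le> L" by (rule degree_le) (auto simp: coeff_Pol)
  show "L \<le> degree (Pol w0 T L)" by (rule le_degree) (simp add: coeff_Pol)
qed

lemma lead_Pol: "lead_coeff (Pol w0 T L) = 1"
  by (simp add: degree_Pol coeff_Pol)

lemma poly_Pol:
  "poly (of_int_poly (Pol w0 T L)) (z::complex) = z^L - (\<Sum>K\<in>{2..L-1}. of_int (w0 * T K) * z^(L-1-K))"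
  unfolding Pol_def by (simp add: of_int_poly_hom.hom_minus of_int_poly_hom.hom_sum
      of_int_hom.map_poly_hom_monom poly_sum poly_monom)

lemma Pol_inj_root:
  fixes q :: int and z :: complex
  assumes pr: "prime q" and L: "L \<ge> 3" and dv: "\<forall>K\<in>{2..L-1}. q dvd w0 * T K"
    and nd: "\<not> q^2 dvd w0 * T (L-1)"
    and z1: "poly (of_int_poly (Pol w0 T L)) z = 0" and z2: "poly (of_int_poly (Pol w0 T' L)) z = 0"
  shows "Pol w0 T L = Pol w0 T' L"
proof (rule ccontr)
  assume ne: "Pol w0 T L \<noteq> Pol w0 T' L"
  have irr: "irreducible (Pol w0 T L)"
  proof (rule eis_irreducible[OF pr])
    show "lead_coeff (Pol w0 T L) = 1" by (rule lead_Pol)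
    show "1 \<le> degree (Pol w0 T L)" using L by (simp add: degree_Pol)
    fix i assume "i < degree (Pol w0 T L)"
    hence i: "i < L" by (simp add: degree_Pol)
    show "q dvd coeff (Pol w0 T L) i"
    proof (cases "i + 3 \<le> L")
      case True
      hence "L - 1 - i \<in> {2..L-1}" by auto
      with dv True i show ?thesis by (simp add: coeff_Pol)
    qed (use i in \<open>simp add: coeff_Pol\<close>)
  next
    have "coeff (Pol w0 T L) 0 = - (w0 * T (L-1))" using L by (simp add: coeff_Pol)
    with nd show "\<not> q\<^sup>2 dvd coeff (Pol w0 T L) 0" by simp
  qed
  hence pe: "prime_elem (Pol w0 T L)" by (rule irreducible_imp_prime_poly)
  define R where "R = Pol w0 T' L - Pol w0 T L"
  have R0: "R \<noteq> 0" using ne unfolding R_def by simp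
  have dR: "degree R < L"
  proof -
    have "degree R \<le> L - 1"
      by (rule degree_le) (use L in \<open>auto simp: R_def coeff_Pol\<close>)
    thus ?thesis using L by simp
  qed
  have "poly (of_int_poly R) z = poly (of_int_poly (Pol w0 T' L)) z - poly (of_int_poly (Pol w0 T L)) z"
    unfolding R_def by (simp add: hom_distribs)
  hence zR: "poly (of_int_poly R) z = 0" using z1 z2 by simp
  show False
    by (rule no_common_root[OF pe R0 _ z1 zR]) (use dR in \<open>simp add: degree_Pol\<close>)
qed

lemma coeff_Pol':
  assumes "K \<in> {2..L-1}"
  shows "coeff (Pol w0 T L) (L-1-K) = - (w0 * T K)"
proof -
  have t: "L - 1 - K + 3 \<le> L" "L - 1 - K \<noteq> L" "L - 1 - (L - 1 - K) = K" using assms by auto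
  show ?thesis unfolding coeff_Pol using t by presburger
qed

lemma Pol_eq_imp:
  assumes "Pol w0 T L = Pol w0 T' L" "w0 \<noteq> 0" "K \<in> {2..L-1}"
  shows "T K = T' K"
proof -
  have "coeff (Pol w0 T L) (L-1-K) = coeff (Pol w0 T' L) (L-1-K)" using assms(1) by simp
  hence "w0 * T K = w0 * T' K" unfolding coeff_Pol'[OF assms(3)] by simp
  thus ?thesis using assms(2) by simp
qed



definition Mt :: "nat \<Rightarrow> int \<Rightarrow> int \<Rightarrow> (nat \<Rightarrow> nat \<Rightarrow> int) \<Rightarrow> int mat" where
  "Mt n w0 s B = mat (2*n+1) (2*n+1) (\<lambda>(r,c). if r = 0 then (if c = n+1 then w0 else 0)
     else if r \<le> n then (if c + 1 = r then 1 else 0)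
     else (if c = r + 1 then s else if 1 \<le> c \<and> c \<le> n then B (r-n) c else 0))"

definition Xv :: "nat \<Rightarrow> int \<Rightarrow> (nat \<Rightarrow> nat \<Rightarrow> int) \<Rightarrow> complex \<Rightarrow> nat \<Rightarrow> complex" where
  "Xv n s B z i = (\<Sum>i'\<in>{i..n}. \<Sum>j\<in>{1..n}. of_int (B i' j) * of_int s^(i'-i) / z^(i'-i+1+j))"

definition Ev :: "nat \<Rightarrow> int \<Rightarrow> (nat \<Rightarrow> nat \<Rightarrow> int) \<Rightarrow> complex \<Rightarrow> complex vec" where
  "Ev n s B z = vec (2*n+1) (\<lambda>c. if c \<le> n then 1 / z^c else Xv n s B z (c-n))"

lemma Mt_height:
  assumes "\<bar>w0\<bar> \<le> int h" "\<bar>s\<bar> \<le> int h" "1 \<le> h" "\<And>i j. \<bar>B i j\<bar> \<le> int h"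
  shows "Mt n w0 s B \<in> int_mats_height (2*n+1) h"
  unfolding int_mats_height_def Mt_def using assms by auto

lemma Xv_empty: "Xv n s B z (n+1) = 0"
  unfolding Xv_def by simp

lemma Xv_rec:
  assumes z: "z \<noteq> 0" and i: "1 \<le> i" "i \<le> n"
  shows "z * Xv n s B z i = (\<Sum>j\<in>{1..n}. of_int (B i j) / z^j) + of_int s * Xv n s B z (i+1)"
proof -
  have split: "{i..n} = insert i {i+1..n}" using i by auto
  have A: "z * (\<Sum>j\<in>{1..n}. of_int (B i j) * of_int s^(i-i) / z^(i-i+1+j))
        = (\<Sum>j\<in>{1..n}. of_int (B i j) / z^j)"
    unfolding sum_distrib_left by (rule sum.cong) (use z in \<open>auto simp: field_simps\<close>)
  have B: "z * (\<Sum>i'\<in>{i+1..n}. \<Sum>j\<in>{1..n}. of_int (B i' j) * of_int s^(i'-i) / z^(i'-i+1+j))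
        = of_int s * Xv n s B z (i+1)"
    unfolding Xv_def sum_distrib_left
  proof (rule sum.cong[OF refl], rule sum.cong[OF refl])
    fix i' j assume "i' \<in> {i+1..n}"
    hence e1: "i' - i = Suc (i' - (i+1))" by auto
    show "z * (of_int (B i' j) * of_int s ^ (i' - i) / z ^ (i' - i + 1 + j)) =
          of_int s * (of_int (B i' j) * of_int s ^ (i' - (i + 1)) / z ^ (i' - (i + 1) + 1 + j))"
      unfolding e1 using z by (simp add: field_simps)
  qed
  have X: "Xv n s B z i = (\<Sum>j\<in>{1..n}. of_int (B i j) * of_int s^(i-i) / z^(i-i+1+j))
     + (\<Sum>i'\<in>{i+1..n}. \<Sum>j\<in>{1..n}. of_int (B i' j) * of_int s^(i'-i) / z^(i'-i+1+j))"
    unfolding Xv_def split by (rule sum.insert) auto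
  show ?thesis unfolding X distrib_left A B ..
qed

lemma sum_if_eq: "finite S \<Longrightarrow> (\<Sum>c\<in>S. (of_int (if c = a then w else 0) :: complex) * f c)
   = (if a \<in> S then of_int w * f a else 0)"
proof -
  assume fin: "finite S"
  have "(\<Sum>c\<in>S. (of_int (if c = a then w else 0) :: complex) * f c) = (\<Sum>c\<in>S. if c = a then of_int w * f c else 0)"
    by (rule sum.cong) auto
  also have "\<dots> = (if a \<in> S then of_int w * f a else 0)" using fin by (simp add: sum.delta)
  finally show ?thesis .
qed

lemma eigen_Mt:
  fixes z :: complex
  assumes n: "n \<ge> 1" and z: "z \<noteq> 0"
    and hyp: "z^(2*n+1) = of_int w0 * (\<Sum>i\<in>{1..n}. \<Sum>j\<in>{1..n}. of_int (B i j) * of_int s^(i-1) * z^(2*n-i-j))"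
  shows "eigenvalue (map_mat of_int (Mt n w0 s B)) z"
proof -
  let ?M = "map_mat (of_int :: int \<Rightarrow> complex) (Mt n w0 s B)"
  let ?v = "Ev n s B z"
  have dimM: "dim_row ?M = 2*n+1" "dim_col ?M = 2*n+1" by (simp_all add: Mt_def)
  have ent: "\<And>r c. r < 2*n+1 \<Longrightarrow> c < 2*n+1 \<Longrightarrow> ?M $$ (r,c) = of_int (if r = 0 then (if c = n+1 then w0 else 0)
     else if r \<le> n then (if c + 1 = r then 1 else 0)
     else (if c = r + 1 then s else if 1 \<le> c \<and> c \<le> n then B (r-n) c else 0))"
    by (simp add: Mt_def)
  have vv: "\<And>c. c < 2*n+1 \<Longrightarrow> ?v $ c = (if c \<le> n then 1 / z^c else Xv n s B z (c-n))"
    by (simp add: Ev_def)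
  have dv: "dim_vec ?v = 2*n+1" by (simp add: Ev_def)
  have row: "(?M *\<^sub>v ?v) $ r = (\<Sum>c\<in>{0..<2*n+1}. ?M $$ (r,c) * ?v $ c)" if r: "r < 2*n+1" for r
  proof -
    have "(?M *\<^sub>v ?v) $ r = row ?M r \<bullet> ?v" by (rule index_mult_mat_vec) (use r dimM in simp)
    also have "\<dots> = (\<Sum>c\<in>{0..<2*n+1}. ?M $$ (r,c) * ?v $ c)"
      unfolding scalar_prod_def dv by (rule sum.cong[OF refl]) (use r dimM in simp)
    finally show ?thesis .
  qed
  have X1: "of_int w0 * Xv n s B z 1 = z"
  proof -
    have "z^(2*n) * Xv n s B z 1 = (\<Sum>i\<in>{1..n}. \<Sum>j\<in>{1..n}. of_int (B i j) * of_int s^(i-1) * z^(2*n-i-j))"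
      unfolding Xv_def sum_distrib_left
    proof (rule sum.cong[OF refl], rule sum.cong[OF refl])
      fix i j assume i: "i \<in> {1..n}" and j: "j \<in> {1..n}"
      have e: "z^(2*n) = z^(2*n-i-j) * z^(i - 1 + 1 + j)" using i j
        by (simp add: power_add[symmetric])
      show "z ^ (2 * n) * (of_int (B i j) * of_int s ^ (i - 1) / z ^ (i - 1 + 1 + j)) =
            of_int (B i j) * of_int s ^ (i - 1) * z ^ (2 * n - i - j)"
        unfolding e using z by (simp add: field_simps)
    qed
    hence "z^(2*n) * (of_int w0 * Xv n s B z 1) = z^(2*n) * z"
      using hyp by (simp add: algebra_simps)
    thus ?thesis using z by simp
  qed
  have eq: "?M *\<^sub>v ?v = z \<cdot>\<^sub>v ?v"
  proof (rule eq_vecI)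
    show "dim_vec (?M *\<^sub>v ?v) = dim_vec (z \<cdot>\<^sub>v ?v)" by (simp add: Mt_def Ev_def)
    fix r assume "r < dim_vec (z \<cdot>\<^sub>v ?v)"
    hence r: "r < 2*n+1" by (simp add: Ev_def)
    show "(?M *\<^sub>v ?v) $ r = (z \<cdot>\<^sub>v ?v) $ r"
    proof -
      have rhs: "(z \<cdot>\<^sub>v ?v) $ r = z * ?v $ r" using r by (simp add: Ev_def)
      consider "r = 0" | "1 \<le> r \<and> r \<le> n" | "n < r" by linarith
      thus ?thesis
      proof cases
        case 1
        have "(?M *\<^sub>v ?v) $ r = (\<Sum>c\<in>{0..<2*n+1}. of_int (if c = n+1 then w0 else 0) * ?v $ c)"
          unfolding row[OF r] using 1 by (intro sum.cong) (auto simp: ent)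
        also have "\<dots> = of_int w0 * ?v $ (n+1)" using n by (subst sum_if_eq) auto
        also have "\<dots> = of_int w0 * Xv n s B z 1" using vv[of "n+1"] n by simp
        also have "\<dots> = z" by (rule X1)
        finally show ?thesis using rhs 1 vv[of 0] by simp
      next
        case 2
        have "(?M *\<^sub>v ?v) $ r = (\<Sum>c\<in>{0..<2*n+1}. of_int (if c = r - 1 then 1 else 0) * ?v $ c)"
          unfolding row[OF r] using 2 r by (intro sum.cong) (auto simp: ent)
        also have "\<dots> = ?v $ (r - 1)" using r by (subst sum_if_eq) auto
        also have "\<dots> = 1 / z^(r-1)"
        proof -
          have "r - 1 < 2*n+1" using 2 by linarith
          moreover have "r - 1 \<le> n" using 2 by linarith
          ultimately show ?thesis using vv[of "r-1"] by simp
        qed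
        also have "\<dots> = z * (1 / z^r)"
        proof -
          obtain k where k: "r = Suc k" using 2 by (cases r) auto
          show ?thesis unfolding k using z by (simp add: field_simps)
        qed
        finally show ?thesis using rhs 2 vv[OF r] by simp
      next
        case 3
        define i where "i = r - n"
        have i: "1 \<le> i" "i \<le> n" "r = n + i" using 3 r unfolding i_def by auto
        have "(?M *\<^sub>v ?v) $ r = (\<Sum>c\<in>{0..<2*n+1}. (if c = r + 1 then of_int s * ?v $ c else 0)
                + (if c \<in> {1..n} then of_int (B i c) * ?v $ c else 0))"
          unfolding row[OF r] using 3 r by (intro sum.cong) (auto simp: ent i_def)
        also have "\<dots> = (\<Sum>c\<in>{0..<2*n+1}. if c = r + 1 then of_int s * ?v $ c else 0)
                + (\<Sum>c\<in>{0..<2*n+1}. if c \<in> {1..n} then of_int (B i c) * ?v $ c else 0)"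
          by (rule sum.distrib)
        also have "(\<Sum>c\<in>{0..<2*n+1}. if c = r + 1 then of_int s * ?v $ c else 0)
             = (if r + 1 \<in> {0..<2*n+1} then of_int s * ?v $ (r+1) else 0)"
          by (rule sum.delta) simp
        also have "(\<Sum>c\<in>{0..<2*n+1}. if c \<in> {1..n} then of_int (B i c) * ?v $ c else 0)
             = (\<Sum>c\<in>{0..<2*n+1} \<inter> {1..n}. of_int (B i c) * ?v $ c)"
          by (rule sum.inter_restrict[symmetric]) simp
        also have "{0..<2*n+1} \<inter> {1..n} = {1..n}" by auto
        also have "(\<Sum>c\<in>{1..n}. of_int (B i c) * ?v $ c) = (\<Sum>c\<in>{1..n}. of_int (B i c) / z^c)"
          by (rule sum.cong) (auto simp: vv)
        also have "(if r + 1 \<in> {0..<2*n+1} then of_int s * ?v $ (r+1) else 0) = of_int s * Xv n s B z (i+1)"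
        proof (cases "i < n")
          case True
          hence "r + 1 < 2*n+1" using i by simp
          thus ?thesis using vv[of "r+1"] i by simp
        next
          case False
          hence "i = n" using i by simp
          thus ?thesis using i Xv_empty[of n s B z] by simp
        qed
        also have "of_int s * Xv n s B z (i+1) + (\<Sum>c\<in>{1..n}. of_int (B i c) / z^c) = z * Xv n s B z i"
          using Xv_rec[OF z i(1,2)] by simp
        also have "\<dots> = z * ?v $ r" using vv[OF r] i by simp
        finally show ?thesis using rhs by simp
      qed
    qed
  qed
  have carr: "?v \<in> carrier_vec (dim_row ?M)" by (simp add: Mt_def Ev_def)
  have nz: "?v \<noteq> 0\<^sub>v (dim_row ?M)"
  proof
    assume "?v = 0\<^sub>v (dim_row ?M)"
    hence "?v $ 0 = 0\<^sub>v (dim_row ?M) $ 0" by simp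
    thus False using vv[of 0] dimM by simp
  qed
  show ?thesis unfolding eigenvalue_def eigenvector_def using carr nz eq by blast
qed



definition lo :: "nat \<Rightarrow> nat \<Rightarrow> nat" where "lo n K = K - 1 - n"
definition hi :: "nat \<Rightarrow> nat \<Rightarrow> nat" where "hi n K = min n (K - 1)"
definition Cond :: "nat \<Rightarrow> int \<Rightarrow> (nat \<Rightarrow> int) \<Rightarrow> bool" where
  "Cond n s T = (\<forall>K\<in>{2..2*n}. 0 \<le> T K \<and> T K < s^(hi n K) \<and> s^(lo n K) dvd T K)"
definition Dg :: "int \<Rightarrow> (nat \<Rightarrow> int) \<Rightarrow> nat \<Rightarrow> nat \<Rightarrow> int" where
  "Dg s T i j = (T (i+j) div s^(i-1)) mod s"

lemma digits_sum:
  fixes s T :: int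
  assumes s: "s > 0"
  shows "0 \<le> T \<Longrightarrow> T < s^N \<Longrightarrow> (\<Sum>p<N. (T div s^p mod s) * s^p) = T"
proof (induction N arbitrary: T)
  case 0 thus ?case by simp
next
  case (Suc N)
  have d: "\<And>p. T div (s * s^p) = (T div s) div s^p"
    using s by (simp add: zdiv_zmult2_eq)
  have "(\<Sum>p<Suc N. (T div s^p mod s) * s^p) = T mod s + (\<Sum>p<N. (T div s^(Suc p) mod s) * s^(Suc p))"
    by (simp only: sum.lessThan_Suc_shift power_0 div_by_1 mult_1_right)
  also have "(\<Sum>p<N. (T div s^(Suc p) mod s) * s^(Suc p)) = s * (\<Sum>p<N. ((T div s) div s^p mod s) * s^p)"
    by (simp add: d sum_distrib_left algebra_simps)
  also have "(\<Sum>p<N. ((T div s) div s^p mod s) * s^p) = T div s"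
  proof (rule Suc.IH)
    show "0 \<le> T div s" using Suc.prems s by (simp add: pos_imp_zdiv_nonneg_iff)
    show "T div s < s^N"
    proof (rule ccontr)
      assume "\<not> T div s < s^N"
      hence "s^N \<le> T div s" by simp
      hence "s * s^N \<le> s * (T div s)" using s by simp
      moreover have "s * (T div s) + T mod s = T" by (rule mult_div_mod_eq)
      moreover have "0 \<le> T mod s" using s by simp
      ultimately show False using Suc.prems(2) by (simp only: power_Suc)
    qed
  qed
  also have "T mod s + s * (T div s) = T" by simp
  finally show ?case .
qed

lemma digit_zero_low:
  fixes s T :: int
  assumes "s > 0" "0 \<le> T" "T < s^m" "m \<le> p"
  shows "T div s^p mod s = 0"
proof -
  have "s^m \<le> s^p" using assms by (simp add: power_increasing)
  hence "T div s^p = 0" using assms by (simp add: div_pos_pos_trivial)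
  thus ?thesis by simp
qed

lemma digit_zero_high:
  fixes s T :: int
  assumes "s > 0" "s^(p+1) dvd T"
  shows "T div s^p mod s = 0"
proof -
  obtain k where k: "T = s^(p+1) * k" using assms(2) by (auto elim: dvdE)
  have "T = s^p * (s * k)" unfolding k by (simp add: algebra_simps)
  hence "T div s^p = s * k" using assms(1) by simp
  thus ?thesis by simp
qed

lemma regroup:
  fixes z :: complex and s :: int
  assumes s: "s > 0" and C: "Cond n s T"
  shows "(\<Sum>i\<in>{1..n}. \<Sum>j\<in>{1..n}. of_int (Dg s T i j) * of_int s^(i-1) * z^(2*n-i-j))
       = (\<Sum>K\<in>{2..2*n}. of_int (T K) * z^(2*n-K))"
proof -
  define g where "g i K = of_int ((T K div s^(i-1)) mod s) * of_int s^(i-1) * z^(2*n-K)" for i K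
  have step1: "(\<Sum>j\<in>{1..n}. of_int (Dg s T i j) * of_int s^(i-1) * z^(2*n-i-j)) = (\<Sum>K\<in>{2..2*n}. g i K)"
    if i: "i \<in> {1..n}" for i
  proof -
    have "(\<Sum>j\<in>{1..n}. of_int (Dg s T i j) * of_int s^(i-1) * z^(2*n-i-j)) = (\<Sum>j\<in>{1..n}. g i (j+i))"
      by (rule sum.cong) (auto simp: g_def Dg_def add.commute)
    also have "\<dots> = (\<Sum>K\<in>{1+i..n+i}. g i K)" by (rule sum.shift_bounds_cl_nat_ivl[symmetric])
    also have "\<dots> = (\<Sum>K\<in>{2..2*n}. g i K)"
    proof (rule sum.mono_neutral_left)
      show "finite {2..2*n}" by simp
      show "{1+i..n+i} \<subseteq> {2..2*n}" using i by auto
      show "\<forall>K\<in>{2..2*n} - {1+i..n+i}. g i K = 0"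
      proof
        fix K assume K: "K \<in> {2..2*n} - {1+i..n+i}"
        have CK: "0 \<le> T K" "T K < s^(hi n K)" "s^(lo n K) dvd T K" using C K unfolding Cond_def by auto
        have "T K div s^(i-1) mod s = 0"
        proof (cases "K \<le> i")
          case True
          show ?thesis by (rule digit_zero_low[OF s CK(1,2)]) (use True in \<open>auto simp: hi_def\<close>)
        next
          case False
          hence "K > n + i" using K by auto
          hence "i - 1 + 1 \<le> lo n K" using i by (auto simp: lo_def)
          hence "s^(i-1+1) dvd T K" using CK(3) by (meson dvd_trans le_imp_power_dvd)
          thus ?thesis by (rule digit_zero_high[OF s])
        qed
        thus "g i K = 0" by (simp add: g_def)
      qed
    qed
    finally show ?thesis .
  qed
  have "(\<Sum>i\<in>{1..n}. \<Sum>j\<in>{1..n}. of_int (Dg s T i j) * of_int s^(i-1) * z^(2*n-i-j))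
      = (\<Sum>i\<in>{1..n}. \<Sum>K\<in>{2..2*n}. g i K)" by (rule sum.cong[OF refl]) (rule step1)
  also have "\<dots> = (\<Sum>K\<in>{2..2*n}. \<Sum>i\<in>{1..n}. g i K)" by (rule sum.swap)
  also have "\<dots> = (\<Sum>K\<in>{2..2*n}. of_int (T K) * z^(2*n-K))"
  proof (rule sum.cong[OF refl])
    fix K assume K: "K \<in> {2..2*n}"
    have CK: "0 \<le> T K" "T K < s^(hi n K)" using C K unfolding Cond_def by auto
    have "s^(hi n K) \<le> s^n" using s by (intro power_increasing) (auto simp: hi_def)
    hence Tn: "T K < s^n" using CK by simp
    have "(\<Sum>i\<in>{1..n}. g i K) = of_int (\<Sum>i\<in>{1..n}. (T K div s^(i-1)) mod s * s^(i-1)) * z^(2*n-K)"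
      by (simp add: g_def sum_distrib_right)
    also have "(\<Sum>i\<in>{1..n}. (T K div s^(i-1)) mod s * s^(i-1)) = (\<Sum>p<n. (T K div s^p) mod s * s^p)"
      by (simp add: sum.atLeast1_atMost_eq)
    also have "\<dots> = T K" by (rule digits_sum[OF s CK(1) Tn])
    finally show "(\<Sum>i\<in>{1..n}. g i K) = of_int (T K) * z^(2*n-K)" .
  qed
  finally show ?thesis .
qed



lemma card_I:
  assumes K: "K \<in> {2..2*n}"
  shows "card {i\<in>{1..n}. i < K \<and> K - i \<le> n} = hi n K - lo n K"
proof -
  have "{i\<in>{1..n}. i < K \<and> K - i \<le> n} = {max 1 (K-n) .. min n (K-1)}" by auto
  hence "card {i\<in>{1..n}. i < K \<and> K - i \<le> n} = Suc (min n (K-1)) - max 1 (K-n)" by simp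
  also have "\<dots> = hi n K - lo n K" using K by (auto simp: hi_def lo_def)
  finally show ?thesis .
qed

lemma sum_L: "(\<Sum>K\<in>{2..2*n}. hi n K - lo n K) = n * n"
proof -
  define I where "I K = {i\<in>{1..n}. i < K \<and> K - i \<le> n}" for K
  have "(\<Sum>K\<in>{2..2*n}. hi n K - lo n K) = (\<Sum>K\<in>{2..2*n}. card (I K))"
  proof (rule sum.cong[OF refl])
    fix K assume K: "K \<in> {2..2*n}"
    show "hi n K - lo n K = card (I K)" unfolding I_def using card_I[OF K] by simp
  qed
  also have "\<dots> = card (Sigma {2..2*n} I)" by (rule card_SigmaI[symmetric]) (auto simp: I_def)
  also have "\<dots> = card ((\<lambda>(K,i). (i, K - i)) ` Sigma {2..2*n} I)"
    by (rule card_image[symmetric]) (auto simp: inj_on_def I_def)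
  also have "(\<lambda>(K,i). (i, K - i)) ` Sigma {2..2*n} I = {1..n} \<times> {1..n}"
  proof (rule equalityI; rule subsetI)
    fix x assume "x \<in> (\<lambda>(K,i). (i, K - i)) ` Sigma {2..2*n} I"
    thus "x \<in> {1..n} \<times> {1..n}" by (auto simp: I_def)
  next
    fix x assume x: "x \<in> {1..n} \<times> {1..n}"
    then obtain a b where ab: "x = (a,b)" "a \<in> {1..n}" "b \<in> {1..n}" by auto
    have "(a+b, a) \<in> Sigma {2..2*n} I" using ab by (auto simp: I_def)
    moreover have "x = (\<lambda>(K,i). (i, K - i)) (a+b, a)" using ab by simp
    ultimately show "x \<in> (\<lambda>(K,i). (i, K - i)) ` Sigma {2..2*n} I" by blast
  qed
  also have "card ({1..n} \<times> {1..n}) = n * n" by (simp add: card_cartesian_product)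
  finally show ?thesis .
qed

lemma finite_mats: "finite (int_mats_height d h)"
proof -
  let ?f = "\<lambda>A::int mat. \<lambda>p. if p \<in> {..<d} \<times> {..<d} then A $$ p else 0"
  have inj: "inj_on ?f (int_mats_height d h)"
  proof (rule inj_onI)
    fix A B assume A: "A \<in> int_mats_height d h" and B: "B \<in> int_mats_height d h" and e: "?f A = ?f B"
    have cA: "A \<in> carrier_mat d d" and cB: "B \<in> carrier_mat d d" using A B by (auto simp: int_mats_height_def)
    show "A = B"
    proof (rule eq_matI)
      fix i j assume "i < dim_row B" "j < dim_col B"
      hence ij: "(i,j) \<in> {..<d} \<times> {..<d}" using cB by auto
      from fun_cong[OF e, of "(i,j)"] ij show "A $$ (i,j) = B $$ (i,j)" by simp
    qed (use cA cB in auto)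
  qed
  have "?f ` int_mats_height d h \<subseteq> {g. \<forall>x. (x \<in> {..<d} \<times> {..<d} \<longrightarrow> g x \<in> {-int h..int h}) \<and> (x \<notin> {..<d} \<times> {..<d} \<longrightarrow> g x = 0)}"
  proof (rule image_subsetI, rule CollectI)
    fix A assume A: "A \<in> int_mats_height d h"
    have b: "\<bar>A $$ (i,j)\<bar> \<le> int h" if "i<d" "j<d" for i j using A that unfolding int_mats_height_def by auto
    show "\<forall>x. (x \<in> {..<d} \<times> {..<d} \<longrightarrow> ?f A x \<in> {-int h..int h}) \<and> (x \<notin> {..<d} \<times> {..<d} \<longrightarrow> ?f A x = 0)"
    proof (intro allI conjI impI)
      fix x assume "x \<in> {..<d} \<times> {..<d}"
      then obtain i j where x: "x = (i,j)" "i<d" "j<d" by auto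
      with b[of i j] show "?f A x \<in> {-int h..int h}" by (simp add: abs_le_iff)
    next
      fix x assume "x \<notin> {..<d} \<times> {..<d}" thus "?f A x = 0" by simp
    qed
  qed
  moreover have "finite {g. \<forall>x. (x \<in> {..<d} \<times> {..<d} \<longrightarrow> g x \<in> {-int h..int h}) \<and> (x \<notin> {..<d} \<times> {..<d} \<longrightarrow> g x = (0::int))}"
    by (rule finite_set_of_finite_funs) auto
  ultimately have "finite (?f ` int_mats_height d h)" by (rule finite_subset)
  thus ?thesis using inj by (rule finite_imageD)
qed

lemma finite_spec: "finite (spec d h)"
proof -
  have "spec d h \<subseteq> (\<Union>A\<in>int_mats_height d h. {z. poly (char_poly (map_mat (of_int :: int \<Rightarrow> complex) A)) z = 0})"
  proof
    fix z assume "z \<in> spec d h"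
    then obtain A where A: "A \<in> int_mats_height d h" and ev: "eigenvalue (map_mat of_int A) z"
      unfolding spec_def by auto
    have "map_mat (of_int :: int \<Rightarrow> complex) A \<in> carrier_mat d d" using A by (auto simp: int_mats_height_def)
    hence "poly (char_poly (map_mat (of_int :: int \<Rightarrow> complex) A)) z = 0"
      using ev eigenvalue_root_char_poly by blast
    thus "z \<in> (\<Union>A\<in>int_mats_height d h. {z. poly (char_poly (map_mat (of_int :: int \<Rightarrow> complex) A)) z = 0})"
      using A by blast
  qed
  moreover have "finite (\<Union>A\<in>int_mats_height d h. {z. poly (char_poly (map_mat (of_int :: int \<Rightarrow> complex) A)) z = 0})"
  proof (rule finite_UN_I[OF finite_mats])
    fix A assume A: "A \<in> int_mats_height d h"
    have "map_mat (of_int :: int \<Rightarrow> complex) A \<in> carrier_mat d d" using A by (auto simp: int_mats_height_def)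
    from degree_monic_char_poly[OF this] have "char_poly (map_mat (of_int :: int \<Rightarrow> complex) A) \<noteq> 0" by auto
    thus "finite {z. poly (char_poly (map_mat (of_int :: int \<Rightarrow> complex) A)) z = 0}"
      by (rule poly_roots_finite)
  qed
  ultimately show ?thesis by (rule finite_subset)
qed



lemma main_lower:
  fixes V :: "(nat \<Rightarrow> int) set" and q w0 s :: int
  assumes n: "n \<ge> 1" and pr: "prime q" and L: "L = 2*n+1 \<or> L = 2*n" and L3: "L \<ge> 3"
    and w0h: "\<bar>w0\<bar> \<le> int h" and s0: "s > 0" and sh: "s \<le> int h" and h1: "1 \<le> h"
    and C: "\<forall>T\<in>V. Cond n s T"
    and dv: "\<forall>T\<in>V. \<forall>K\<in>{2..L-1}. q dvd w0 * T K"
    and nd: "\<forall>T\<in>V. \<not> q^2 dvd w0 * T (L-1)"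
    and top0: "\<forall>T\<in>V. L = 2*n \<longrightarrow> T (2*n) = 0"
    and ext: "\<forall>T\<in>V. \<forall>T'\<in>V. (\<forall>K\<in>{2..L-1}. T K = T' K) \<longrightarrow> T = T'"
  shows "card V \<le> card (spec (2*n+1) h)"
proof -
  define root where "root T = (SOME z. poly (of_int_poly (Pol w0 T L)) z = (0::complex))" for T
  have root: "poly (of_int_poly (Pol w0 T L)) (root T) = (0::complex)" for T
  proof -
    have "degree (of_int_poly (Pol w0 T L) :: complex poly) = L" by (simp add: degree_Pol)
    hence "\<not> constant (poly (of_int_poly (Pol w0 T L) :: complex poly))" using L3 by (simp add: constant_degree)
    from fundamental_theorem_of_algebra[OF this] show ?thesis unfolding root_def by (rule someI_ex)
  qed
  have nz: "root T \<noteq> 0" if T: "T \<in> V" for T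
  proof
    assume r0: "root T = 0"
    have c0: "coeff (Pol w0 T L) 0 = - (w0 * T (L-1))" using L3 by (simp add: coeff_Pol)
    have "poly (of_int_poly (Pol w0 T L)) (0::complex) = of_int (coeff (Pol w0 T L) 0)"
      by (simp add: poly_0_coeff_0)
    hence z: "w0 * T (L-1) = 0" using root[of T] r0 c0 by simp
    have "\<not> q^2 dvd w0 * T (L-1)" using nd T by blast
    thus False unfolding z by simp
  qed
  have inspec: "root T \<in> spec (2*n+1) h" if T: "T \<in> V" for T
  proof -
    define z where "z = root T"
    have z0: "z \<noteq> 0" using nz[OF T] by (simp add: z_def)
    have pz: "z^L - (\<Sum>K\<in>{2..L-1}. of_int (w0 * T K) * z^(L-1-K)) = 0"
      using root[of T] unfolding poly_Pol z_def .
    have key: "z^(2*n+1) = of_int w0 * (\<Sum>K\<in>{2..2*n}. of_int (T K) * z^(2*n-K))"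
      using L
    proof
      assume L1: "L = 2*n+1"
      have "z^(2*n+1) = (\<Sum>K\<in>{2..2*n}. of_int (w0 * T K) * z^(2*n-K))" using pz unfolding L1 by simp
      thus ?thesis by (simp add: sum_distrib_left mult.assoc)
    next
      assume L2: "L = 2*n"
      have "z^(2*n) = (\<Sum>K\<in>{2..2*n-1}. of_int (w0 * T K) * z^(2*n-1-K))" using pz unfolding L2 by simp
      hence "z * z^(2*n) = (\<Sum>K\<in>{2..2*n-1}. of_int (w0 * T K) * (z * z^(2*n-1-K)))"
        by (simp add: sum_distrib_left mult.left_commute)
      also have "\<dots> = (\<Sum>K\<in>{2..2*n-1}. of_int (w0 * T K) * z^(2*n-K))"
      proof (rule sum.cong[OF refl])
        fix K assume "K \<in> {2..2*n-1}"
        hence "2*n - K = Suc (2*n-1-K)" by auto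
        thus "of_int (w0 * T K) * (z * z^(2*n-1-K)) = of_int (w0 * T K) * z^(2*n-K)" by simp
      qed
      also have "\<dots> = (\<Sum>K\<in>{2..2*n}. of_int (w0 * T K) * z^(2*n-K))"
      proof -
        have e: "{2..2*n} = insert (2*n) {2..2*n-1}" using n by auto
        have "(\<Sum>K\<in>{2..2*n}. of_int (w0 * T K) * z^(2*n-K)) = of_int (w0 * T (2*n)) * z^(2*n-2*n)
             + (\<Sum>K\<in>{2..2*n-1}. of_int (w0 * T K) * z^(2*n-K))"
          unfolding e by (rule sum.insert) auto
        thus ?thesis using top0 T L2 by simp
      qed
      finally show ?thesis by (simp add: sum_distrib_left mult.assoc)
    qed
    have "z^(2*n+1) = of_int w0 * (\<Sum>i\<in>{1..n}. \<Sum>j\<in>{1..n}. of_int (Dg s T i j) * of_int s^(i-1) * z^(2*n-i-j))"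
      unfolding regroup[OF s0 C[rule_format, OF T]] by (rule key)
    from eigen_Mt[OF n z0 this]
    have ev: "eigenvalue (map_mat of_int (Mt n w0 s (Dg s T))) z" .
    have "Mt n w0 s (Dg s T) \<in> int_mats_height (2*n+1) h"
    proof (rule Mt_height[OF w0h _ h1])
      show "\<bar>s\<bar> \<le> int h" using s0 sh by simp
      fix i j
      have "0 \<le> Dg s T i j" "Dg s T i j < s" using s0 by (simp_all add: Dg_def)
      thus "\<bar>Dg s T i j\<bar> \<le> int h" using sh by simp
    qed
    with ev show ?thesis unfolding spec_def z_def by blast
  qed
  have inj: "inj_on root V"
  proof (rule inj_onI)
    fix T T' assume T: "T \<in> V" and T': "T' \<in> V" and e: "root T = root T'"
    have "Pol w0 T L = Pol w0 T' L"
    proof (rule Pol_inj_root[OF pr L3])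
      show "\<forall>K\<in>{2..L - 1}. q dvd w0 * T K" using dv T by blast
      show "\<not> q\<^sup>2 dvd w0 * T (L - 1)" using nd T by blast
      show "poly (of_int_poly (Pol w0 T L)) (root T) = 0" by (rule root)
      show "poly (of_int_poly (Pol w0 T' L)) (root T) = 0" using root[of T'] e by simp
    qed
    moreover have "w0 \<noteq> 0" using nd T by auto
    ultimately have "\<forall>K\<in>{2..L-1}. T K = T' K" using Pol_eq_imp by blast
    thus "T = T'" using ext T T' by blast
  qed
  show ?thesis
    by (rule card_inj_on_le[OF inj _ finite_spec]) (use inspec in blast)
qed

lemma pow_ineq: "n * 9^n \<le> (25::nat)^n"
proof (induction n)
  case 0 thus ?case by simp
next
  case (Suc n)
  have "Suc n * 9^Suc n = 9 * (n * 9^n) + 9 * 9^n" by simp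
  also have "\<dots> \<le> 9 * 25^n + 9 * 25^n" using Suc.IH by (intro add_mono) (simp_all add: power_mono)
  also have "\<dots> \<le> 25^Suc n" by simp
  finally show ?case .
qed



lemma hi_lo_top: "n \<ge> 1 \<Longrightarrow> hi n (2*n) = n \<and> lo n (2*n) = n - 1"
  by (auto simp: hi_def lo_def)

lemma lo_le_hi: "K \<in> {2..2*n} \<Longrightarrow> lo n K \<le> hi n K"
  by (auto simp: hi_def lo_def)

lemma pow_split: "lo n K \<le> hi n K \<Longrightarrow> (s::int)^(lo n K) * s^(hi n K - lo n K) = s^(hi n K)"
  by (simp add: power_add[symmetric])

lemma mode1:
  assumes h3: "h \<ge> 3" and n: "n \<ge> 1"
  shows "real h ^ (n*n) / 4 \<le> real (card (spec (2*n+1) h))"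
proof -
  have "h - 1 \<noteq> 1" using h3 by simp
  from prime_factor_nat[OF this] obtain p where p: "prime p" "p dvd h - 1" by blast
  define q where "q = int p"
  have pq: "prime q" using p by (simp add: q_def)
  have p2: "p \<ge> 2" using p(1) by (rule prime_ge_2_nat)
  have ph: "p \<le> h - 1" using p(2) h3 by (intro dvd_imp_le) auto
  have p_h: "\<not> p dvd h"
  proof
    assume "p dvd h"
    hence "p dvd h - (h - 1)" using p(2) by (rule dvd_diff_nat)
    hence "p dvd 1" using h3 by simp
    thus False using p(1) by simp
  qed
  define s where "s = int h"
  have s0: "s > 0" using h3 by (simp add: s_def)
  define TopN where "TopN = {N \<in> {1..h-1}. \<not> p dvd N}"
  define W where "W K = (if K = 2*n then (\<lambda>N. s^(n-1) * int N) ` TopN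
                         else (\<lambda>N. s^(lo n K) * N) ` {0..<s^(hi n K - lo n K)})" for K
  define V where "V = PiE {2..2*n} W"
  have mem: "T \<in> V \<Longrightarrow> K \<in> {2..2*n} \<Longrightarrow> T K \<in> W K" for T K unfolding V_def by auto
  have hl: "hi n (2*n) = n" "lo n (2*n) = n - 1" using hi_lo_top[OF n] by auto
  have le: "card V \<le> card (spec (2*n+1) h)"
  proof (rule main_lower[of n q "2*n+1" q h s V])
    show "1 \<le> n" by fact
    show "prime q" by fact
    show "2*n+1 = 2*n+1 \<or> 2*n+1 = 2*n" by simp
    show "3 \<le> 2*n+1" using n by simp
    show "\<bar>q\<bar> \<le> int h" using ph h3 by (simp add: q_def)
    show "0 < s" by fact
    show "s \<le> int h" by (simp add: s_def)
    show "1 \<le> h" using h3 by simp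
    show "\<forall>T\<in>V. Cond n s T"
    proof (intro ballI, unfold Cond_def, intro ballI)
      fix T K assume T: "T \<in> V" and K: "K \<in> {2..2*n}"
      show "0 \<le> T K \<and> T K < s^(hi n K) \<and> s^(lo n K) dvd T K"
      proof (cases "K = 2*n")
        case True
        from mem[OF T K] True obtain N where N: "N \<in> TopN" "T K = s^(n-1) * int N" by (auto simp: W_def)
        have "int N < s" using N(1) h3 by (auto simp: TopN_def s_def)
        hence "s^(n-1) * int N < s^(n-1) * s" using s0 by simp
        also have "s^(n-1) * s = s^n" using n by (simp add: power_eq_if)
        finally show ?thesis using N True hl s0 by simp
      next
        case False
        from mem[OF T K] False obtain N where N: "0 \<le> N" "N < s^(hi n K - lo n K)" "T K = s^(lo n K) * N"
          by (auto simp: W_def)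
        have "s^(lo n K) * N < s^(lo n K) * s^(hi n K - lo n K)" using N s0 by simp
        also have "\<dots> = s^(hi n K)" by (rule pow_split[OF lo_le_hi[OF K]])
        finally show ?thesis using N s0 by simp
      qed
    qed
    show "\<forall>T\<in>V. \<forall>K\<in>{2..2*n+1-1}. q dvd q * T K" by simp
    show "\<forall>T\<in>V. \<not> q\<^sup>2 dvd q * T (2*n+1-1)"
    proof (intro ballI notI)
      fix T assume T: "T \<in> V" and d: "q\<^sup>2 dvd q * T (2*n+1-1)"
      have K: "2*n \<in> {2..2*n}" using n by simp
      from mem[OF T K] obtain N where N: "N \<in> TopN" "T (2*n) = s^(n-1) * int N" by (auto simp: W_def)
      have "q * q dvd q * (s^(n-1) * int N)" using d N by (simp add: power2_eq_square)
      hence "q dvd s^(n-1) * int N" using pq by (simp add: prime_gt_0_int)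
      hence "q dvd s^(n-1) \<or> q dvd int N" using pq prime_dvd_mult_iff by blast
      thus False
      proof
        assume "q dvd s^(n-1)"
        hence "q dvd s" using pq prime_dvd_power by blast
        hence "p dvd h" by (simp add: q_def s_def)
        with p_h show False by simp
      next
        assume "q dvd int N"
        hence "p dvd N" by (simp add: q_def)
        with N(1) show False by (simp add: TopN_def)
      qed
    qed
    show "\<forall>T\<in>V. 2*n+1 = 2*n \<longrightarrow> T (2*n) = 0" by simp
    show "\<forall>T\<in>V. \<forall>T'\<in>V. (\<forall>K\<in>{2..2*n+1-1}. T K = T' K) \<longrightarrow> T = T'"
      unfolding V_def by (auto intro: PiE_ext)
  qed
  have cW: "card (W K) = h^(hi n K - lo n K)" if K: "K \<in> {2..2*n-1}" for K
  proof -
    have "K \<noteq> 2*n" using K by auto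
    hence "card (W K) = card ((\<lambda>N. s^(lo n K) * N) ` {0..<s^(hi n K - lo n K)})" by (simp add: W_def)
    also have "\<dots> = card {0..<s^(hi n K - lo n K)}" by (rule card_image) (use s0 in \<open>auto simp: inj_on_def\<close>)
    also have "\<dots> = h^(hi n K - lo n K)" by (simp add: s_def nat_power_eq)
    finally show ?thesis .
  qed
  have cTop: "card (W (2*n)) = card TopN"
  proof -
    have "card (W (2*n)) = card ((\<lambda>N. s^(n-1) * int N) ` TopN)" by (simp add: W_def)
    also have "\<dots> = card TopN" by (rule card_image) (use s0 in \<open>auto simp: inj_on_def\<close>)
    finally show ?thesis .
  qed
  have sumL: "(\<Sum>K\<in>{2..2*n-1}. hi n K - lo n K) = n * n - 1"
  proof -
    have e: "{2..2*n} = insert (2*n) {2..2*n-1}" using n by auto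
    have "n * n = (\<Sum>K\<in>{2..2*n}. hi n K - lo n K)" by (rule sum_L[symmetric])
    also have "\<dots> = (hi n (2*n) - lo n (2*n)) + (\<Sum>K\<in>{2..2*n-1}. hi n K - lo n K)"
      unfolding e by (rule sum.insert) auto
    also have "hi n (2*n) - lo n (2*n) = 1" using hl n by simp
    finally show ?thesis by simp
  qed
  have cV: "card V = card TopN * h^(n*n - 1)"
  proof -
    have e: "{2..2*n} = insert (2*n) {2..2*n-1}" using n by auto
    have "card V = (\<Prod>K\<in>{2..2*n}. card (W K))" unfolding V_def by (rule card_PiE) simp
    also have "\<dots> = card (W (2*n)) * (\<Prod>K\<in>{2..2*n-1}. card (W K))"
      unfolding e by (rule prod.insert) auto
    also have "(\<Prod>K\<in>{2..2*n-1}. card (W K)) = (\<Prod>K\<in>{2..2*n-1}. h^(hi n K - lo n K))"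
      by (rule prod.cong[OF refl]) (rule cW)
    also have "\<dots> = h^(\<Sum>K\<in>{2..2*n-1}. hi n K - lo n K)" by (rule power_sum[symmetric])
    finally show ?thesis using cTop sumL by simp
  qed
  have cT: "h \<le> 4 * card TopN"
  proof -
    define A where "A = {1..h-1}"
    define M where "M = {N \<in> A. p dvd N}"
    have TA: "TopN = A - M" by (auto simp: TopN_def A_def M_def)
    have MA: "M \<subseteq> A" by (auto simp: M_def)
    have "M \<subseteq> (\<lambda>t. p * t) ` {1..(h-1) div p}"
    proof
      fix N assume N: "N \<in> M"
      then obtain t where t: "N = p * t" by (auto simp: M_def elim: dvdE)
      have "t \<ge> 1" using N t by (auto simp: M_def A_def)
      moreover have "t \<le> (h-1) div p" using N t p2 by (auto simp: M_def A_def less_eq_div_iff_mult_less_eq mult.commute)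
      ultimately show "N \<in> (\<lambda>t. p * t) ` {1..(h-1) div p}" using t by auto
    qed
    hence "card M \<le> card ((\<lambda>t. p * t) ` {1..(h-1) div p})" by (rule card_mono[rotated]) simp
    also have "\<dots> \<le> card {1..(h-1) div p}" by (rule card_image_le) simp
    also have "\<dots> = (h-1) div p" by simp
    also have "\<dots> \<le> (h-1) div 2" by (rule div_le_mono2) (use p2 in simp_all)
    finally have cM: "card M \<le> (h-1) div 2" .
    have "card TopN = card A - card M" unfolding TA by (rule card_Diff_subset) (use MA in \<open>auto intro: finite_subset simp: A_def\<close>)
    hence "card TopN = (h - 1) - card M" by (simp add: A_def)
    with cM h3 show ?thesis by linarith
  qed
  have hpos: "h^(n*n) = h * h^(n*n-1)"
  proof -
    have "n*n \<noteq> 0" using n by simp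
    then obtain m where m: "n*n = Suc m" by (cases "n*n") auto
    show ?thesis unfolding m by simp
  qed
  have "real h ^ (n*n) / 4 \<le> real (card V)"
  proof -
    have "h^(n*n) \<le> 4 * card TopN * h^(n*n-1)" using cT hpos by (simp add: mult_right_mono)
    hence "h^(n*n) \<le> 4 * card V" unfolding cV by (simp add: mult.assoc)
    hence "real (h^(n*n)) \<le> real (4 * card V)" by (simp only: of_nat_le_iff)
    thus ?thesis by simp
  qed
  also have "\<dots> \<le> real (card (spec (2*n+1) h))" using le by simp
  finally show ?thesis .
qed



lemma prime3: "prime (3::int)"
proof -
  have "{2..<(3::int)} = {2}" by auto
  thus ?thesis by (simp add: prime_int_iff')
qed

lemma mode2:
  assumes n: "n \<ge> 2"
  shows "2^(n*n-3) \<le> 3^(2*n-3) * card (spec (2*n+1) 2)"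
proof -
  define W :: "nat \<Rightarrow> int set" where "W K = (if K = 2*n then {0} else if K = 2*n-1 then {3 * 2^(n-2)}
     else (\<lambda>N. 2^(lo n K) * (3 * N)) ` {0..(2^(hi n K - lo n K) - 1) div 3})" for K :: nat
  define V :: "(nat \<Rightarrow> int) set" where "V = PiE {2..2*n} W"
  have mem: "T \<in> V \<Longrightarrow> K \<in> {2..2*n} \<Longrightarrow> T K \<in> W K" for T K unfolding V_def by auto
  have hl2: "hi n (2*n-1) = n" "lo n (2*n-1) = n - 2" using n by (auto simp: hi_def lo_def)
  have T2n: "T (2*n) = 0" if "T \<in> V" for T using mem[OF that, of "2*n"] n by (simp add: W_def)
  have T2n1: "T (2*n-1) = 3 * 2^(n-2)" if "T \<in> V" for T
  proof -
    have K: "2*n-1 \<in> {2..2*n}" using n by auto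
    have "W (2*n-1) = {3 * 2^(n-2)}" using n by (simp add: W_def)
    thus ?thesis using mem[OF that K] by simp
  qed
  have le: "card V \<le> card (spec (2*n+1) 2)"
  proof (rule main_lower[of n 3 "2*n" 1 2 2 V])
    show "1 \<le> n" using n by simp
    show "prime (3::int)" by (rule prime3)
    show "2*n = 2*n+1 \<or> 2*n = 2*n" by simp
    show "3 \<le> 2*n" using n by simp
    show "\<bar>1::int\<bar> \<le> int 2" by simp
    show "(0::int) < 2" by simp
    show "(2::int) \<le> int 2" by simp
    show "1 \<le> (2::nat)" by simp
    show "\<forall>T\<in>V. Cond n 2 T"
    proof (intro ballI, unfold Cond_def, intro ballI)
      fix T K assume T: "T \<in> V" and K: "K \<in> {2..2*n}"
      show "0 \<le> T K \<and> T K < 2^(hi n K) \<and> 2^(lo n K) dvd T K"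
      proof (cases "K = 2*n")
        case True thus ?thesis using T2n[OF T] by simp
      next
        case False
        show ?thesis
        proof (cases "K = 2*n-1")
          case True
          have "(3::int) * 2^(n-2) < 4 * 2^(n-2)" by simp
          also have "(4::int) * 2^(n-2) = 2^n" using n
            by (metis add_diff_inverse_nat le_antisym not_less power_add power2_eq_square
                mult_2 numeral_Bit0 not_less_eq_eq one_add_one power_commutes)
          finally show ?thesis using True T2n1[OF T] hl2 by simp
        next
          case False2: False
          from mem[OF T K] False False2 obtain N where
            N: "0 \<le> N" "N \<le> (2^(hi n K - lo n K) - 1) div 3" "T K = 2^(lo n K) * (3 * N)"
            by (auto simp: W_def)
          have "3 * N \<le> 2^(hi n K - lo n K) - 1" using N(2) by linarith
          hence "3 * N < (2::int)^(hi n K - lo n K)" by simp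
          hence "2^(lo n K) * (3 * N) < (2::int)^(lo n K) * 2^(hi n K - lo n K)" by simp
          also have "\<dots> = 2^(hi n K)" by (rule pow_split[OF lo_le_hi[OF K]])
          finally show ?thesis using N by simp
        qed
      qed
    qed
    show "\<forall>T\<in>V. \<forall>K\<in>{2..2*n-1}. (3::int) dvd 1 * T K"
    proof (intro ballI)
      fix T K assume T: "T \<in> V" and K: "K \<in> {2..2*n-1}"
      show "(3::int) dvd 1 * T K"
      proof (cases "K = 2*n-1")
        case True thus ?thesis using T2n1[OF T] by simp
      next
        case False
        have K': "K \<in> {2..2*n}" "K \<noteq> 2*n" using K by auto
        from mem[OF T K'(1)] False K'(2) obtain N where "T K = 2^(lo n K) * (3 * N)"
          by (auto simp: W_def)
        thus ?thesis by simp
      qed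
    qed
    show "\<forall>T\<in>V. \<not> (3::int)\<^sup>2 dvd 1 * T (2*n-1)"
    proof (intro ballI notI)
      fix T assume T: "T \<in> V" and d: "(3::int)\<^sup>2 dvd 1 * T (2*n-1)"
      hence "3 * 3 dvd (3::int) * 2^(n-2)" using T2n1[OF T] by (simp add: power2_eq_square)
      then obtain k where k: "(3::int) * 2^(n-2) = (3 * 3) * k" by (elim dvdE)
      hence "(2::int)^(n-2) = 3 * k" by linarith
      hence "(3::int) dvd 2^(n-2)" by simp
      hence "(3::int) dvd 2" using prime3 prime_dvd_power by blast
      thus False by simp
    qed
    show "\<forall>T\<in>V. 2*n = 2*n \<longrightarrow> T (2*n) = 0" using T2n by blast
    show "\<forall>T\<in>V. \<forall>T'\<in>V. (\<forall>K\<in>{2..2*n-1}. T K = T' K) \<longrightarrow> T = T'"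
    proof (intro ballI impI)
      fix T T' assume T: "T \<in> V" and T': "T' \<in> V" and a: "\<forall>K\<in>{2..2*n-1}. T K = T' K"
      show "T = T'" using T T' unfolding V_def
      proof (rule PiE_ext)
        fix K assume K: "K \<in> {2..2*n}"
        show "T K = T' K"
        proof (cases "K = 2*n")
          case True thus ?thesis using T2n[OF T] T2n[OF T'] by simp
        next
          case False thus ?thesis using a K by auto
        qed
      qed
    qed
  qed
  define S where "S = {2..2*n-2}"
  have cW: "2^(hi n K - lo n K) \<le> 3 * card (W K)" if K: "K \<in> S" for K
  proof -
    have "K \<noteq> 2*n" "K \<noteq> 2*n-1" using K by (auto simp: S_def)
    hence "card (W K) = card ((\<lambda>N. 2^(lo n K) * (3 * N)) ` {0..((2::int)^(hi n K - lo n K) - 1) div 3})"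
      by (simp add: W_def)
    also have "\<dots> = card {0..((2::int)^(hi n K - lo n K) - 1) div 3}" by (rule card_image) (auto simp: inj_on_def)
    also have "\<dots> = nat (((2::int)^(hi n K - lo n K) - 1) div 3 + 1)" by simp
    finally have c: "int (card (W K)) = ((2::int)^(hi n K - lo n K) - 1) div 3 + 1"
      by (simp add: pos_imp_zdiv_nonneg_iff)
    have "\<And>x::int. x \<le> 3 * ((x - 1) div 3 + 1)" by presburger
    hence "(2::int)^(hi n K - lo n K) \<le> 3 * int (card (W K))" unfolding c by blast
    hence "int (2^(hi n K - lo n K)) \<le> int (3 * card (W K))" by simp
    thus ?thesis by (simp only: of_nat_le_iff)
  qed
  have cV: "card V = (\<Prod>K\<in>S. card (W K))"
  proof -
    have e: "{2..2*n} = insert (2*n) (insert (2*n-1) S)" using n by (auto simp: S_def)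
    have "card V = (\<Prod>K\<in>{2..2*n}. card (W K))" unfolding V_def by (rule card_PiE) simp
    also have "\<dots> = card (W (2*n)) * (\<Prod>K\<in>insert (2*n-1) S. card (W K))"
      unfolding e by (rule prod.insert) (use n in \<open>auto simp: S_def\<close>)
    also have "(\<Prod>K\<in>insert (2*n-1) S. card (W K)) = card (W (2*n-1)) * (\<Prod>K\<in>S. card (W K))"
      by (rule prod.insert) (use n in \<open>auto simp: S_def\<close>)
    also have "card (W (2*n)) = 1" by (simp add: W_def)
    also have "card (W (2*n-1)) = 1" using n by (simp add: W_def)
    finally show ?thesis by simp
  qed
  have sumL: "(\<Sum>K\<in>S. hi n K - lo n K) = n * n - 3"
  proof -
    have e: "{2..2*n} = insert (2*n) (insert (2*n-1) S)" using n by (auto simp: S_def)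
    have "n * n = (\<Sum>K\<in>{2..2*n}. hi n K - lo n K)" by (rule sum_L[symmetric])
    also have "\<dots> = (hi n (2*n) - lo n (2*n)) + (\<Sum>K\<in>insert (2*n-1) S. hi n K - lo n K)"
      unfolding e by (rule sum.insert) (use n in \<open>auto simp: S_def\<close>)
    also have "(\<Sum>K\<in>insert (2*n-1) S. hi n K - lo n K) = (hi n (2*n-1) - lo n (2*n-1)) + (\<Sum>K\<in>S. hi n K - lo n K)"
      by (rule sum.insert) (use n in \<open>auto simp: S_def\<close>)
    also have "hi n (2*n) - lo n (2*n) = 1" using hi_lo_top[of n] n by simp
    also have "hi n (2*n-1) - lo n (2*n-1) = 2" using hl2 n by simp
    finally show ?thesis by simp
  qed
  have cS: "card S = 2*n-3" by (simp add: S_def)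
  have "2^(n*n-3) = (\<Prod>K\<in>S. (2::nat)^(hi n K - lo n K))" unfolding sumL[symmetric] by (rule power_sum)
  also have "\<dots> \<le> (\<Prod>K\<in>S. 3 * card (W K))" by (rule prod_mono) (use cW in simp)
  also have "\<dots> = 3^(card S) * card V" unfolding cV by (simp add: prod.distrib)
  also have "\<dots> \<le> 3^(2*n-3) * card (spec (2*n+1) 2)" unfolding cS using le by simp
  finally show ?thesis .
qed

lemma zero_in_spec:
  assumes d: "d \<ge> 1"
  shows "0 \<in> spec d h"
proof -
  let ?A = "0\<^sub>m d d :: int mat"
  have A: "?A \<in> int_mats_height d h" by (simp add: int_mats_height_def)
  let ?M = "map_mat (of_int :: int \<Rightarrow> complex) ?A"
  let ?v = "unit_vec d 0 :: complex vec"
  have "eigenvector ?M ?v 0"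
    unfolding eigenvector_def
  proof (intro conjI)
    show "?v \<in> carrier_vec (dim_row ?M)" by simp
    show "?v \<noteq> 0\<^sub>v (dim_row ?M)"
    proof
      assume "?v = 0\<^sub>v (dim_row ?M)"
      hence "?v $ 0 = 0\<^sub>v (dim_row ?M) $ 0" by simp
      thus False using d by simp
    qed
    show "?M *\<^sub>v ?v = 0 \<cdot>\<^sub>v ?v"
      by (rule eq_vecI) (auto simp: scalar_prod_def)
  qed
  hence "eigenvalue ?M 0" unfolding eigenvalue_def by blast
  with A show ?thesis unfolding spec_def by blast
qed



theorem mainTheorem3:
  fixes n h :: nat
  assumes "h > 0"
    and "\<exists>k. n = 2 ^ k"
  shows "real (card (spec (2 * n + 1) h)) \<ge> (2 * real n / 5 ^ (2 * n)) * real h ^ (n ^ 2)"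
proof -
  from assms(2) obtain k where nk: "n = 2^k" by auto
  have n1: "n \<ge> 1" using nk by simp
  define C where "C = card (spec (2 * n + 1) h)"
  have P: "n * 9^n \<le> 25^n" by (rule pow_ineq)
  have n9: "9 * n \<le> n * 9^n"
  proof -
    have "(9::nat)^1 \<le> 9^n" using n1 by (intro power_increasing) simp_all
    hence "9 \<le> (9::nat)^n" by simp
    thus ?thesis by simp
  qed
  have C1: "1 \<le> C"
  proof -
    have "0 \<in> spec (2*n+1) h" by (rule zero_in_spec) simp
    hence "spec (2*n+1) h \<noteq> {}" by auto
    thus ?thesis unfolding C_def using finite_spec[of "2*n+1" h] by (simp add: Suc_leI card_gt_0_iff)
  qed
  have key: "2 * n * h^(n*n) \<le> C * 25^n"
  proof -
    consider "h = 1" | "h = 2 \<and> n = 1" | "h = 2 \<and> n \<ge> 2" | "h \<ge> 3" using assms(1) n1 by linarith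
    thus ?thesis
    proof cases
      case 1
      have "2 * n \<le> 25^n" using P n9 by linarith
      also have "\<dots> \<le> C * 25^n" using C1 by simp
      finally show ?thesis using 1 by simp
    next
      case 2
      thus ?thesis using C1 by simp
    next
      case 3
      hence h2: "h = 2" and n2: "n \<ge> 2" by auto
      have m2: "2^(n*n-3) \<le> 3^(2*n-3) * C" using mode2[OF n2] h2 by (simp add: C_def)
      have e1: "(2::nat)^(n*n) = 8 * 2^(n*n-3)"
      proof -
        have "n*n \<ge> 2*2" using mult_le_mono[OF n2 n2] .
        hence "n*n \<ge> 3" by simp
        hence "n*n = (n*n-3) + 3" by simp
        hence "(2::nat)^(n*n) = 2^(n*n-3) * 2^3" by (metis power_add)
        thus ?thesis by simp
      qed
      have e2: "27 * 3^(2*n-3) = (9::nat)^n"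
      proof -
        have "2*n = (2*n-3) + 3" using n2 by simp
        hence "(3::nat)^(2*n) = 3^(2*n-3) * 3^3" by (metis power_add)
        moreover have "(3::nat)^(2*n) = 9^n" by (simp add: power_mult)
        ultimately show ?thesis by simp
      qed
      have f: "16 * n * 3^(2*n-3) \<le> 25^n"
      proof -
        have "27 * (16 * n * 3^(2*n-3)) = 16 * (n * 9^n)" using e2 by (simp add: algebra_simps)
        also have "\<dots> \<le> 16 * 25^n" using P by simp
        also have "\<dots> \<le> 27 * 25^n" by simp
        finally show ?thesis by simp
      qed
      have "2 * n * h^(n*n) = 16 * n * 2^(n*n-3)" using h2 e1 by simp
      also have "\<dots> \<le> 16 * n * (3^(2*n-3) * C)" using m2 by simp
      also have "\<dots> = (16 * n * 3^(2*n-3)) * C" by (simp add: algebra_simps)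
      also have "\<dots> \<le> 25^n * C" using f by simp
      finally show ?thesis by (simp add: mult.commute)
    next
      case 4
      have "real h ^ (n*n) / 4 \<le> real C" using mode1[OF 4 n1] by (simp add: C_def)
      hence "real (h^(n*n)) \<le> real (4 * C)" by simp
      hence m1: "h^(n*n) \<le> 4 * C" by (simp only: of_nat_le_iff)
      have "2 * n * h^(n*n) \<le> 2 * n * (4 * C)" using m1 by simp
      also have "\<dots> = (8 * n) * C" by simp
      also have "\<dots> \<le> 25^n * C" using P n9 by (intro mult_right_mono) linarith+
      finally show ?thesis by (simp add: mult.commute)
    qed
  qed
  have "real (2 * n * h^(n*n)) \<le> real (C * 25^n)" using key by (simp only: of_nat_le_iff)
  hence k2: "2 * real n * real h ^ (n*n) \<le> real C * 25^n" by simp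
  have "(2 * real n / 5 ^ (2 * n)) * real h ^ (n ^ 2) = (2 * real n * real h ^ (n*n)) / 25^n"
    by (simp add: power_mult power2_eq_square)
  also have "\<dots> \<le> real C" using k2 by (simp add: pos_divide_le_eq)
  finally show ?thesis by (simp add: C_def)
qed


end
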